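(* Let $N\ge1$. Disregarding height assignments, any two $N$-cube Adinkras are isomorphic; i.e. there is a bijection between their vertex sets preserving adjacency, edge colors and the boson/fermion bipartition which, after switching a suitable set of vertices, also preserves edge parities.
   Context: An Adinkra of dimension $N$ is a finite connected simple graph $G=(V,E)$ together with: (1) a bipartition of $V$ into bosons and fermions such that every edge joins a boson and a fermion; (2) a height function $\mathrm{hgt}:V\to\mathbb{Z}$ with $|\mathrm{hgt}(u)-\mathrm{hgt}(v)|=1$ for every edge $uv$; (3) a coloring of $E$ by colors $\{1,\dots,N\}$ such that each vertex is incident to exactly one edge of each color; (4) an edge parity $\pi:E\to\mathbb{Z}_2$ (edges of parity $1$ are called dashed). These must satisfy: every path with edge colors $(i,j)$, $i\neq j$, lies in a unique 4-cycle with colors $(i,j,i,j)$, and every such two-colored 4-cycle has an odd number of dashed edges. An $N$-cube Adinkra is an Adinkra of dimension $N$ with $2^N$ vertices (its underlying graph is the $N$-dimensional hypercube). Switching a vertex reverses the parity of all edges incident to it. *)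

theory Defs
  imports Main
begin

text \<open>Vertices V :: 'v set; edges E are 2-element
  subsets of V; boson v says v is a boson (else fermion); hgt is the height;
  col e is the colour of edge e; par e = True means e is dashed (parity 1).\<close>

definition adinkra ::
  "nat \<Rightarrow> 'v set \<Rightarrow> 'v set set \<Rightarrow> ('v \<Rightarrow> bool) \<Rightarrow> ('v \<Rightarrow> int)
     \<Rightarrow> ('v set \<Rightarrow> nat) \<Rightarrow> ('v set \<Rightarrow> bool) \<Rightarrow> bool" where
  "adinkra N V E boson hgt col par \<longleftrightarrow>
     finite V \<and> V \<noteq> {} \<and>
     \<comment> \<open>simple graph\<close>
     (\<forall>e\<in>E. \<exists>u v. e = {u, v} \<and> u \<in> V \<and> v \<in> V \<and> u \<noteq> v) \<and>
     \<comment> \<open>connected\<close>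
     (\<forall>u\<in>V. \<forall>v\<in>V. (\<lambda>x y. {x, y} \<in> E)\<^sup>*\<^sup>* u v) \<and>
     \<comment> \<open>bipartition into bosons and fermions\<close>
     (\<forall>u v. {u, v} \<in> E \<longrightarrow> boson u \<noteq> boson v) \<and>
     \<comment> \<open>height function\<close>
     (\<forall>u v. {u, v} \<in> E \<longrightarrow> \<bar>hgt u - hgt v\<bar> = 1) \<and>
     \<comment> \<open>edge colouring by colours 1..N, each vertex has exactly one edge of each colour\<close>
     (\<forall>e\<in>E. col e \<in> {1..N}) \<and>
     (\<forall>v\<in>V. \<forall>i\<in>{1..N}. \<exists>!e. e \<in> E \<and> v \<in> e \<and> col e = i) \<and>
     \<comment> \<open>every (i,j)-path lies in a unique (i,j,i,j) 4-cycle, which has an odd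
        number of dashed edges\<close>
     (\<forall>u v w i j. i \<noteq> j \<and> {u, v} \<in> E \<and> col {u, v} = i \<and> {v, w} \<in> E \<and> col {v, w} = j
        \<longrightarrow> (\<exists>!x. {w, x} \<in> E \<and> col {w, x} = i \<and> {x, u} \<in> E \<and> col {x, u} = j)) \<and>
     (\<forall>u v w x i j. i \<noteq> j \<and> {u, v} \<in> E \<and> col {u, v} = i \<and> {v, w} \<in> E \<and> col {v, w} = j
        \<and> {w, x} \<in> E \<and> col {w, x} = i \<and> {x, u} \<in> E \<and> col {x, u} = j
        \<longrightarrow> odd (length (filter par [{u, v}, {v, w}, {w, x}, {x, u}])))"

definition cube_adinkra ::
  "nat \<Rightarrow> 'v set \<Rightarrow> 'v set set \<Rightarrow> ('v \<Rightarrow> bool) \<Rightarrow> ('v \<Rightarrow> int)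
     \<Rightarrow> ('v set \<Rightarrow> nat) \<Rightarrow> ('v set \<Rightarrow> bool) \<Rightarrow> bool" where
  "cube_adinkra N V E boson hgt col par \<longleftrightarrow>
     adinkra N V E boson hgt col par \<and> card V = 2 ^ N"

definition switch_par :: "'v set \<Rightarrow> ('v set \<Rightarrow> bool) \<Rightarrow> 'v set \<Rightarrow> bool" where
  "switch_par S par e = (par e \<noteq> odd (card (e \<inter> S)))"

end

theory Submission imports Defs begin

locale adk =
  fixes N :: nat and V :: "'v set" and E :: "'v set set" and boson :: "'v \<Rightarrow> bool"
    and hgt :: "'v \<Rightarrow> int" and col :: "'v set \<Rightarrow> nat" and par :: "'v set \<Rightarrow> bool"
  assumes adk: "adinkra N V E boson hgt col par"
begin
lemmas AD = adk[unfolded adinkra_def]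
lemma c0: "finite V" using AD by (elim conjE)
lemmas c1 = AD[THEN conjunct2, THEN conjunct2, THEN conjunct1]
lemmas c2 = AD[THEN conjunct2, THEN conjunct2, THEN conjunct2, THEN conjunct1]
lemmas c3 = AD[THEN conjunct2, THEN conjunct2, THEN conjunct2, THEN conjunct2, THEN conjunct1]
lemmas c5 = AD[THEN conjunct2, THEN conjunct2, THEN conjunct2, THEN conjunct2, THEN conjunct2, THEN conjunct2, THEN conjunct1]
lemmas c6 = AD[THEN conjunct2, THEN conjunct2, THEN conjunct2, THEN conjunct2, THEN conjunct2, THEN conjunct2, THEN conjunct2, THEN conjunct1]
lemmas c7 = AD[THEN conjunct2, THEN conjunct2, THEN conjunct2, THEN conjunct2, THEN conjunct2, THEN conjunct2, THEN conjunct2, THEN conjunct2, THEN conjunct1]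
lemmas c8 = AD[THEN conjunct2, THEN conjunct2, THEN conjunct2, THEN conjunct2, THEN conjunct2, THEN conjunct2, THEN conjunct2, THEN conjunct2, THEN conjunct2]

lemma finV: "finite V" using c0 by blast
lemma Eform: "e \<in> E \<Longrightarrow> \<exists>u v. e = {u, v} \<and> u \<in> V \<and> v \<in> V \<and> u \<noteq> v"
  using c1 by blast
lemma conn: "u \<in> V \<Longrightarrow> v \<in> V \<Longrightarrow> (\<lambda>x y. {x, y} \<in> E)\<^sup>*\<^sup>* u v"
  using c2 by blast
lemma bip: "{u, v} \<in> E \<Longrightarrow> boson u \<noteq> boson v"
  using c3 by blast
lemma colr: "e \<in> E \<Longrightarrow> col e \<in> {1..N}"
  using c5 by blast
lemma ex1: "v \<in> V \<Longrightarrow> i \<in> {1..N} \<Longrightarrow> \<exists>!e. e \<in> E \<and> v \<in> e \<and> col e = i"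
  using c6 by blast
lemma sq: "i \<noteq> j \<Longrightarrow> {u, v} \<in> E \<Longrightarrow> col {u, v} = i \<Longrightarrow> {v, w} \<in> E \<Longrightarrow> col {v, w} = j
        \<Longrightarrow> (\<exists>!x. {w, x} \<in> E \<and> col {w, x} = i \<and> {x, u} \<in> E \<and> col {x, u} = j)"
  using c7 by blast
lemma oddsq: "i \<noteq> j \<Longrightarrow> {u, v} \<in> E \<Longrightarrow> col {u, v} = i \<Longrightarrow> {v, w} \<in> E \<Longrightarrow> col {v, w} = j
        \<Longrightarrow> {w, x} \<in> E \<Longrightarrow> col {w, x} = i \<Longrightarrow> {x, u} \<in> E \<Longrightarrow> col {x, u} = j
        \<Longrightarrow> odd (length (filter par [{u, v}, {v, w}, {w, x}, {x, u}]))"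
  using c8 by blast

lemma edge_V: "{u, v} \<in> E \<Longrightarrow> u \<in> V \<and> v \<in> V \<and> u \<noteq> v"
proof -
  assume "{u, v} \<in> E"
  then obtain a b where "{u,v} = {a,b}" "a \<in> V" "b \<in> V" "a \<noteq> b" using Eform by blast
  then show ?thesis by (metis doubleton_eq_iff)
qed

definition nb :: "nat \<Rightarrow> 'v \<Rightarrow> 'v" where
  "nb i v = (THE w. {v, w} \<in> E \<and> col {v, w} = i)"

lemma nb_uniq: assumes "v \<in> V" "i \<in> {1..N}" "{v,w} \<in> E" "col {v,w} = i" "{v,w'} \<in> E" "col {v,w'} = i"
  shows "w = w'"
proof -
  have "{v,w} = {v,w'}" using ex1[OF assms(1,2)] assms(3-6) by blast
  moreover have "w \<noteq> v" using edge_V[OF assms(3)] by blast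
  ultimately show ?thesis by (metis doubleton_eq_iff)
qed

lemma nb_ex: assumes "v \<in> V" "i \<in> {1..N}" shows "\<exists>w. {v, w} \<in> E \<and> col {v, w} = i"
proof -
  obtain e where e: "e \<in> E" "v \<in> e" "col e = i" using ex1[OF assms] by blast
  obtain a b where "e = {a,b}" using Eform[OF e(1)] by blast
  with e show ?thesis by (metis insert_commute insertE singletonD)
qed

lemma nb: assumes "v \<in> V" "i \<in> {1..N}" shows "{v, nb i v} \<in> E" "col {v, nb i v} = i"
proof -
  obtain w where w: "{v, w} \<in> E \<and> col {v, w} = i" using nb_ex[OF assms] by blast
  have "{v, nb i v} \<in> E \<and> col {v, nb i v} = i"
    unfolding nb_def by (rule theI[of _ w]) (use w nb_uniq[OF assms] in blast)+
  then show "{v, nb i v} \<in> E" "col {v, nb i v} = i" by auto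
qed

lemma nb_eq: assumes "v \<in> V" "i \<in> {1..N}" "{v,w} \<in> E" "col {v,w} = i" shows "w = nb i v"
  using nb_uniq[OF assms(1,2,3,4)] nb[OF assms(1,2)] by blast

lemma nb_V: "v \<in> V \<Longrightarrow> i \<in> {1..N} \<Longrightarrow> nb i v \<in> V"
  using nb edge_V by blast

lemma nb_nb: assumes "v \<in> V" "i \<in> {1..N}" shows "nb i (nb i v) = v"
proof -
  have "{nb i v, v} \<in> E" "col {nb i v, v} = i" using nb[OF assms] by (auto simp: insert_commute)
  then show ?thesis using nb_eq[OF nb_V[OF assms] assms(2)] by metis
qed

lemma nb_boson: "v \<in> V \<Longrightarrow> i \<in> {1..N} \<Longrightarrow> boson (nb i v) = (\<not> boson v)"
  using nb bip by blast

lemma nb_comm0: assumes "u \<in> V" "i \<in> {1..N}" "j \<in> {1..N}" "i \<noteq> j"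
  shows "nb i (nb j (nb i u)) = nb j u"
proof -
  let ?v = "nb i u" let ?w = "nb j ?v"
  have vV: "?v \<in> V" using nb_V assms by blast
  have wV: "?w \<in> V" using nb_V vV assms by blast
  obtain x where x: "{?w, x} \<in> E" "col {?w, x} = i" "{x, u} \<in> E" "col {x, u} = j"
    using sq[OF assms(4) nb[OF assms(1,2)] nb[OF vV assms(3)]] by blast
  have "x = nb i ?w" using nb_eq[OF wV assms(2) x(1,2)] .
  moreover have "x = nb j u" using nb_eq[OF assms(1,3)] x(3,4) by (simp add: insert_commute)
  ultimately show ?thesis by simp
qed

lemma nb_comm: assumes "v \<in> V" "i \<in> {1..N}" "j \<in> {1..N}"
  shows "nb i (nb j v) = nb j (nb i v)"
proof (cases "i = j")
  case False
  have "nb i (nb j (nb i (nb i v))) = nb j (nb i v)" using nb_comm0[OF nb_V[OF assms(1,2)] assms(2,3) False] .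
  then show ?thesis using nb_nb[OF assms(1,2)] by simp
qed simp

lemma foldr_V: "set xs \<subseteq> {1..N} \<Longrightarrow> v \<in> V \<Longrightarrow> foldr nb xs v \<in> V"
  by (induction xs) (auto intro: nb_V)

lemma foldr_insort: "set xs \<subseteq> {1..N} \<Longrightarrow> i \<in> {1..N} \<Longrightarrow> v \<in> V \<Longrightarrow>
   foldr nb (insort i xs) v = nb i (foldr nb xs v)"
proof (induction xs)
  case (Cons y ys)
  show ?case
  proof (cases "i \<le> y")
    case False
    then have "foldr nb (insort i (y#ys)) v = nb y (nb i (foldr nb ys v))" using Cons by simp
    also have "\<dots> = nb i (nb y (foldr nb ys v))"
      using nb_comm[OF foldr_V] Cons.prems by simp
    finally show ?thesis by simp
  qed simp
qed simp

definition act :: "nat set \<Rightarrow> 'v \<Rightarrow> 'v" where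
  "act T v = foldr nb (sorted_list_of_set T) v"

lemma act_empty[simp]: "act {} v = v" by (simp add: act_def)

lemma act_V: "T \<subseteq> {1..N} \<Longrightarrow> v \<in> V \<Longrightarrow> act T v \<in> V"
proof -
  assume a: "T \<subseteq> {1..N}" "v \<in> V"
  then have "finite T" using finite_subset by blast
  then show ?thesis unfolding act_def using a by (intro foldr_V) auto
qed

lemma act_insert: "T \<subseteq> {1..N} \<Longrightarrow> i \<in> {1..N} \<Longrightarrow> i \<notin> T \<Longrightarrow> v \<in> V \<Longrightarrow>
  act (insert i T) v = nb i (act T v)"
proof -
  assume a: "T \<subseteq> {1..N}" "i \<in> {1..N}" "i \<notin> T" "v \<in> V"
  then have "finite T" using finite_subset by blast
  then show ?thesis unfolding act_def using a
    by (subst sorted_list_of_set_insert) (auto intro!: foldr_insort)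
qed

definition flip :: "nat \<Rightarrow> nat set \<Rightarrow> nat set" where
  "flip i T = (if i \<in> T then T - {i} else insert i T)"

lemma flip_sub: "T \<subseteq> {1..N} \<Longrightarrow> i \<in> {1..N} \<Longrightarrow> flip i T \<subseteq> {1..N}"
  unfolding flip_def by auto

lemma act_flip: assumes "T \<subseteq> {1..N}" "i \<in> {1..N}" "v \<in> V"
  shows "act (flip i T) v = nb i (act T v)"
proof (cases "i \<in> T")
  case True
  have "act T v = nb i (act (T - {i}) v)"
    using act_insert[of "T - {i}" i v] assms True by (simp add: insert_absorb subset_iff)
  then have "nb i (act T v) = nb i (nb i (act (T - {i}) v))" by simp
  also have "\<dots> = act (T - {i}) v" using nb_nb[OF act_V[of "T - {i}" v] assms(2)] assms by auto
  finally show ?thesis using True by (simp add: flip_def)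
qed (use assms act_insert in \<open>auto simp: flip_def\<close>)

lemma act_boson: "T \<subseteq> {1..N} \<Longrightarrow> v \<in> V \<Longrightarrow> boson (act T v) = (boson v \<noteq> odd (card T))"
proof -
  assume a: "T \<subseteq> {1..N}" "v \<in> V"
  have "finite T" using a finite_subset by blast
  then show ?thesis using a
  proof (induction T rule: finite_induct)
    case (insert x F)
    have "boson (act (insert x F) v) = (\<not> boson (act F v))"
      using act_insert[of F x v] nb_boson[of "act F v" x] act_V[of F v] insert by auto
    then show ?case using insert by auto
  qed simp
qed

lemma act_surj: assumes "a \<in> V" "v \<in> V" shows "\<exists>T \<subseteq> {1..N}. v = act T a"
proof -
  have "(\<lambda>x y. {x, y} \<in> E)\<^sup>*\<^sup>* a v" using conn assms by blast
  then show ?thesis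
  proof (induction rule: rtranclp_induct)
    case base
    then show ?case by (intro exI[of _ "{}"]) auto
  next
    case (step y z)
    then obtain T where T: "T \<subseteq> {1..N}" "y = act T a" by blast
    have yV: "y \<in> V" using T act_V assms by blast
    have c: "col {y, z} \<in> {1..N}" using colr step by blast
    have "z = nb (col {y,z}) y" using nb_eq[OF yV c] step by blast
    then have "z = act (flip (col {y,z}) T) a" using act_flip[OF T(1) c assms(1)] T by simp
    then show ?case using flip_sub[OF T(1) c] by blast
  qed
qed

lemma sq_par: assumes "T \<subseteq> {1..N}" "i \<in> {1..N}" "j \<in> {1..N}" "i \<noteq> j" "i \<notin> T" "j \<notin> T" "a \<in> V"
  shows "par {act T a, act (insert i T) a} \<noteq> (par {act (insert i T) a, act (insert j (insert i T)) a}
     \<noteq> (par {act (insert j T) a, act (insert i (insert j T)) a} \<noteq> par {act T a, act (insert j T) a}))"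
proof -
  let ?A = "act T a" and ?X = "act (insert i T) a" and ?Y = "act (insert j T) a"
    and ?Z = "act (insert j (insert i T)) a"
  have AV: "?A \<in> V" using act_V assms by blast
  have X: "?X = nb i ?A" using act_insert assms by blast
  have Y: "?Y = nb j ?A" using act_insert assms by blast
  have XV: "?X \<in> V" using act_V assms by auto
  have YV: "?Y \<in> V" using act_V assms by auto
  have Z1: "?Z = nb j ?X" using act_insert[of "insert i T" j a] assms by auto
  have Z2: "?Z = nb i ?Y" using act_insert[of "insert j T" i a] assms by (auto simp: insert_commute)
  have e1: "{?A, ?X} \<in> E" "col {?A, ?X} = i" using nb[OF AV assms(2)] X by auto
  have e2: "{?X, ?Z} \<in> E" "col {?X, ?Z} = j" using nb[OF XV assms(3)] Z1 by auto
  have e3: "{?Z, ?Y} \<in> E" "col {?Z, ?Y} = i" using nb[OF YV assms(2)] Z2 by (auto simp: insert_commute)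
  have e4: "{?Y, ?A} \<in> E" "col {?Y, ?A} = j" using nb[OF AV assms(3)] Y by (auto simp: insert_commute)
  have "odd (length (filter par [{?A, ?X}, {?X, ?Z}, {?Z, ?Y}, {?Y, ?A}]))"
    using oddsq[OF assms(4) e1 e2 e3 e4] .
  moreover have "insert i (insert j T) = insert j (insert i T)" by (rule insert_commute)
  moreover have "\<And>p a b c d. odd (length (filter p [a,b,c,d])) = (p a \<noteq> (p b \<noteq> (p c \<noteq> p d)))"
    by auto
  moreover have "{?Z, ?Y} = {?Y, ?Z}" "{?Y, ?A} = {?A, ?Y}" by auto
  ultimately show ?thesis by metis
qed

end

locale cadk = adk +
  assumes cardV: "card V = 2 ^ N"
begin

lemma img: "a \<in> V \<Longrightarrow> (\<lambda>T. act T a) ` Pow {1..N} = V"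
  using act_surj act_V by blast

lemma bij: assumes "a \<in> V" shows "bij_betw (\<lambda>T. act T a) (Pow {1..N}) V"
proof -
  have "inj_on (\<lambda>T. act T a) (Pow {1..N})"
    by (rule eq_card_imp_inj_on) (simp, simp only: img[OF assms] cardV card_Pow finite_atLeastAtMost card_atLeastAtMost, simp)
  then show ?thesis using img[OF assms] by (simp add: bij_betw_def)
qed

lemma edge_char: assumes "a \<in> V" "T \<subseteq> {1..N}" "U \<subseteq> {1..N}"
  shows "{act T a, act U a} \<in> E \<longleftrightarrow> (\<exists>i\<in>{1..N}. U = flip i T)"
proof
  assume e: "{act T a, act U a} \<in> E"
  let ?i = "col {act T a, act U a}"
  have c: "?i \<in> {1..N}" using colr e by blast
  have "act U a = nb ?i (act T a)" using nb_eq[OF act_V[OF assms(2,1)] c e] by simp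
  then have "act U a = act (flip ?i T) a" using act_flip[OF assms(2) c assms(1)] by simp
  then have "U = flip ?i T" using bij[OF assms(1)] flip_sub[OF assms(2) c] assms(3)
    unfolding bij_betw_def inj_on_def by blast
  then show "\<exists>i\<in>{1..N}. U = flip i T" using c by blast
next
  assume "\<exists>i\<in>{1..N}. U = flip i T"
  then obtain i where "i \<in> {1..N}" "U = flip i T" by blast
  then show "{act T a, act U a} \<in> E" using act_flip[OF assms(2) _ assms(1)] nb act_V assms by auto
qed

lemma col_flip: assumes "a \<in> V" "T \<subseteq> {1..N}" "i \<in> {1..N}"
  shows "col {act T a, act (flip i T) a} = i"
  using act_flip[OF assms(2,3,1)] nb act_V assms by auto

end

primrec G :: "(nat set \<Rightarrow> nat \<Rightarrow> bool) \<Rightarrow> nat \<Rightarrow> nat set \<Rightarrow> bool" where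
  "G D 0 T = False"
| "G D (Suc k) T = (if Suc k \<in> T then (G D k (T - {Suc k}) \<noteq> D (T - {Suc k}) (Suc k)) else G D k T)"

lemma G_pot:
  assumes coc: "\<And>T i j. T \<subseteq> {1..N} \<Longrightarrow> i \<in> {1..N} \<Longrightarrow> j \<in> {1..N} \<Longrightarrow> i \<noteq> j \<Longrightarrow> i \<notin> T \<Longrightarrow> j \<notin> T
     \<Longrightarrow> (D T i \<noteq> D (insert i T) j) = (D T j \<noteq> D (insert j T) i)"
  shows "k \<le> N \<Longrightarrow> T \<subseteq> {1..k} \<Longrightarrow> i \<in> {1..k} \<Longrightarrow> i \<notin> T \<Longrightarrow> G D k (insert i T) = (G D k T \<noteq> D T i)"
proof (induction k arbitrary: T i)
  case 0
  then show ?case by simp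
next
  case (Suc k)
  show ?case
  proof (cases "i = Suc k")
    case True
    then have "insert i T - {Suc k} = T" using Suc.prems by auto
    moreover have "Suc k \<notin> T" using True Suc.prems by auto
    ultimately show ?thesis using True by simp
  next
    case False
    then have i: "i \<in> {1..k}" using Suc.prems by auto
    show ?thesis
    proof (cases "Suc k \<in> T")
      case True
      define T' where "T' = T - {Suc k}"
      have T': "T' \<subseteq> {1..k}" "i \<notin> T'" "Suc k \<notin> T'" "T = insert (Suc k) T'"
        using Suc.prems True unfolding T'_def by auto
      have e1: "insert i T - {Suc k} = insert i T'" using False unfolding T'_def by auto
      have IH: "G D k (insert i T') = (G D k T' \<noteq> D T' i)" using Suc.IH[OF _ T'(1) i T'(2)] Suc.prems by simp
      have c: "(D T' i \<noteq> D (insert i T') (Suc k)) = (D T' (Suc k) \<noteq> D (insert (Suc k) T') i)"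
      proof -
        have T'N: "T' \<subseteq> {1..N}" using T'(1) Suc.prems(1) by auto
        have "i \<in> {1..N}" "Suc k \<in> {1..N}" using i Suc.prems(1) by auto
        then show ?thesis using coc[OF T'N] T'(2,3) False by blast
      qed
      have l: "G D (Suc k) (insert i T) = (G D k (insert i T') \<noteq> D (insert i T') (Suc k))"
        using True e1 by simp
      have r: "G D (Suc k) T = (G D k T' \<noteq> D T' (Suc k))" using True unfolding T'_def by simp
      have c': "(D T' i \<noteq> D (insert i T') (Suc k)) = (D T' (Suc k) \<noteq> D T i)"
        using c T'(4) by simp
      show ?thesis unfolding l r IH using c' by auto
    next
      case False
      then have "T \<subseteq> {1..k}" using Suc.prems(2) by (auto simp: subset_iff le_Suc_eq)
      then show ?thesis using False \<open>i \<noteq> Suc k\<close> Suc.IH[of T i] i Suc.prems by simp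
    qed
  qed
qed

lemma card_two_int: "x \<noteq> y \<Longrightarrow> odd (card ({x, y} \<inter> S)) = ((x \<in> S) \<noteq> (y \<in> S))"
  by (cases "x \<in> S"; cases "y \<in> S") auto

theorem mainTheorem2:
  fixes V1 :: "'a set" and E1 :: "'a set set" and boson1 :: "'a \<Rightarrow> bool"
    and hgt1 :: "'a \<Rightarrow> int" and col1 :: "'a set \<Rightarrow> nat" and par1 :: "'a set \<Rightarrow> bool"
    and V2 :: "'b set" and E2 :: "'b set set" and boson2 :: "'b \<Rightarrow> bool"
    and hgt2 :: "'b \<Rightarrow> int" and col2 :: "'b set \<Rightarrow> nat" and par2 :: "'b set \<Rightarrow> bool"
    and N :: nat
  assumes "N \<ge> 1"
    and "cube_adinkra N V1 E1 boson1 hgt1 col1 par1"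
    and "cube_adinkra N V2 E2 boson2 hgt2 col2 par2"
  shows "\<exists>f. bij_betw f V1 V2
    \<and> (\<forall>u\<in>V1. \<forall>v\<in>V1. {f u, f v} \<in> E2 \<longleftrightarrow> {u, v} \<in> E1)
    \<and> (\<forall>u\<in>V1. \<forall>v\<in>V1. {u, v} \<in> E1 \<longrightarrow> col2 {f u, f v} = col1 {u, v})
    \<and> (\<forall>v\<in>V1. boson2 (f v) = boson1 v)
    \<and> (\<exists>S \<subseteq> V1. \<forall>u\<in>V1. \<forall>v\<in>V1. {u, v} \<in> E1 \<longrightarrow>
          par2 {f u, f v} = switch_par S par1 {u, v})"
proof -
  interpret A1: cadk N V1 E1 boson1 hgt1 col1 par1
    using assms(2) unfolding cube_adinkra_def by unfold_locales auto
  interpret A2: cadk N V2 E2 boson2 hgt2 col2 par2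
    using assms(3) unfolding cube_adinkra_def by unfold_locales auto
  obtain a where a: "a \<in> V1" using A1.AD[THEN conjunct2, THEN conjunct1] by blast
  obtain b0 where b0: "b0 \<in> V2" using A2.AD[THEN conjunct2, THEN conjunct1] by blast
  define b where "b = (if boson2 b0 = boson1 a then b0 else A2.nb 1 b0)"
  have one: "(1::nat) \<in> {1..N}" using assms(1) by auto
  have b: "b \<in> V2" "boson2 b = boson1 a"
    using b0 A2.nb_V[OF b0 one] A2.nb_boson[OF b0 one] unfolding b_def by auto
  define P where "P = Pow {1..N::nat}"
  define \<phi>1 where "\<phi>1 = (\<lambda>T. A1.act T a)"
  define \<phi>2 where "\<phi>2 = (\<lambda>T. A2.act T b)"
  define \<psi> where "\<psi> = inv_into P \<phi>1"
  define f where "f = \<phi>2 \<circ> \<psi>"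
  have bij1: "bij_betw \<phi>1 P V1" using A1.bij[OF a] unfolding \<phi>1_def P_def .
  have bij2: "bij_betw \<phi>2 P V2" using A2.bij[OF b(1)] unfolding \<phi>2_def P_def .
  have fbij: "bij_betw f V1 V2" unfolding f_def \<psi>_def
    using bij_betw_trans[OF bij_betw_inv_into[OF bij1] bij2] .
  have inj1: "\<And>T U. T \<in> P \<Longrightarrow> U \<in> P \<Longrightarrow> \<phi>1 T = \<phi>1 U \<longleftrightarrow> T = U"
    using bij1 unfolding bij_betw_def inj_on_def by blast
  have f\<phi>: "\<And>T. T \<in> P \<Longrightarrow> f (\<phi>1 T) = \<phi>2 T"
    unfolding f_def \<psi>_def using bij_betw_inv_into_left[OF bij1] by simp
  have all2: "\<And>Q. (\<And>T U. T \<in> P \<Longrightarrow> U \<in> P \<Longrightarrow> Q (\<phi>1 T) (\<phi>1 U)) \<Longrightarrow> \<forall>u\<in>V1. \<forall>v\<in>V1. Q u v"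
    using bij1 unfolding bij_betw_def by blast
  have all1: "\<And>Q. (\<And>T. T \<in> P \<Longrightarrow> Q (\<phi>1 T)) \<Longrightarrow> \<forall>u\<in>V1. Q u"
    using bij1 unfolding bij_betw_def by blast
  have edge_iff: "\<And>T U. T \<in> P \<Longrightarrow> U \<in> P \<Longrightarrow> {\<phi>1 T, \<phi>1 U} \<in> E1 \<longleftrightarrow> {\<phi>2 T, \<phi>2 U} \<in> E2"
  proof -
    fix T U assume "T \<in> P" "U \<in> P"
    then have h: "T \<subseteq> {1..N}" "U \<subseteq> {1..N}" unfolding P_def by auto
    show "{\<phi>1 T, \<phi>1 U} \<in> E1 \<longleftrightarrow> {\<phi>2 T, \<phi>2 U} \<in> E2"
      unfolding \<phi>1_def \<phi>2_def A1.edge_char[OF a h] A2.edge_char[OF b(1) h] ..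
  qed
  have P1: "\<forall>u\<in>V1. \<forall>v\<in>V1. {f u, f v} \<in> E2 \<longleftrightarrow> {u, v} \<in> E1"
    by (rule all2) (simp add: f\<phi> edge_iff)
  have P2: "\<forall>u\<in>V1. \<forall>v\<in>V1. {u, v} \<in> E1 \<longrightarrow> col2 {f u, f v} = col1 {u, v}"
  proof (rule all2)
    fix T U assume TU: "T \<in> P" "U \<in> P"
    show "{\<phi>1 T, \<phi>1 U} \<in> E1 \<longrightarrow> col2 {f (\<phi>1 T), f (\<phi>1 U)} = col1 {\<phi>1 T, \<phi>1 U}"
    proof
      assume e: "{\<phi>1 T, \<phi>1 U} \<in> E1"
      have h: "T \<subseteq> {1..N}" "U \<subseteq> {1..N}" using TU unfolding P_def by auto
      obtain i where i: "i \<in> {1..N}" "U = A1.flip i T"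
        using e unfolding \<phi>1_def A1.edge_char[OF a h] by blast
      show "col2 {f (\<phi>1 T), f (\<phi>1 U)} = col1 {\<phi>1 T, \<phi>1 U}"
        unfolding f\<phi>[OF TU(1)] f\<phi>[OF TU(2)] unfolding i(2) \<phi>1_def \<phi>2_def
          A1.col_flip[OF a h(1) i(1)] A2.col_flip[OF b(1) h(1) i(1)] ..
    qed
  qed
  have P3: "\<forall>v\<in>V1. boson2 (f v) = boson1 v"
  proof (rule all1)
    fix T assume T: "T \<in> P"
    then have h: "T \<subseteq> {1..N}" unfolding P_def by auto
    show "boson2 (f (\<phi>1 T)) = boson1 (\<phi>1 T)"
      unfolding f\<phi>[OF T] unfolding \<phi>1_def \<phi>2_def A1.act_boson[OF h a] A2.act_boson[OF h b(1)] b(2) ..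
  qed
  define D where "D = (\<lambda>T i. par1 {\<phi>1 T, \<phi>1 (insert i T)} \<noteq> par2 {\<phi>2 T, \<phi>2 (insert i T)})"
  have coc: "\<And>T i j. T \<subseteq> {1..N} \<Longrightarrow> i \<in> {1..N} \<Longrightarrow> j \<in> {1..N} \<Longrightarrow> i \<noteq> j \<Longrightarrow> i \<notin> T \<Longrightarrow> j \<notin> T
     \<Longrightarrow> (D T i \<noteq> D (insert i T) j) = (D T j \<noteq> D (insert j T) i)"
  proof -
    fix T i j assume h: "T \<subseteq> {1..N}" "i \<in> {1..N}" "j \<in> {1..N}" "i \<noteq> j" "i \<notin> T" "j \<notin> T"
    note s1 = A1.sq_par[OF h a]
    note s2 = A2.sq_par[OF h b(1)]
    show "(D T i \<noteq> D (insert i T) j) = (D T j \<noteq> D (insert j T) i)"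
    proof -
      have e: "insert i (insert j T) = insert j (insert i T)" by auto
      show ?thesis using s1 s2 unfolding D_def \<phi>1_def \<phi>2_def e by argo
    qed
  qed
  define g where "g = G D N"
  have pot: "\<And>T i. T \<subseteq> {1..N} \<Longrightarrow> i \<in> {1..N} \<Longrightarrow> i \<notin> T \<Longrightarrow> g (insert i T) = (g T \<noteq> D T i)"
    unfolding g_def by (rule G_pot[OF coc]) auto
  define S where "S = \<phi>1 ` {T \<in> P. g T}"
  have SV: "S \<subseteq> V1" unfolding S_def using bij1 unfolding bij_betw_def by blast
  have inS: "\<And>T. T \<in> P \<Longrightarrow> \<phi>1 T \<in> S \<longleftrightarrow> g T" unfolding S_def using inj1 by blast
  have P4: "\<forall>u\<in>V1. \<forall>v\<in>V1. {u, v} \<in> E1 \<longrightarrow> par2 {f u, f v} = switch_par S par1 {u, v}"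
  proof (rule all2)
    fix T U assume TU: "T \<in> P" "U \<in> P"
    show "{\<phi>1 T, \<phi>1 U} \<in> E1 \<longrightarrow> par2 {f (\<phi>1 T), f (\<phi>1 U)} = switch_par S par1 {\<phi>1 T, \<phi>1 U}"
    proof
      assume e: "{\<phi>1 T, \<phi>1 U} \<in> E1"
      have h: "T \<subseteq> {1..N}" "U \<subseteq> {1..N}" using TU unfolding P_def by auto
      obtain i where i: "i \<in> {1..N}" "U = A1.flip i T"
        using e unfolding \<phi>1_def A1.edge_char[OF a h] by blast
      have ne: "\<phi>1 T \<noteq> \<phi>1 U" using A1.edge_V[OF e] by blast
      have sw: "switch_par S par1 {\<phi>1 T, \<phi>1 U} = (par1 {\<phi>1 T, \<phi>1 U} \<noteq> (g T \<noteq> g U))"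
        unfolding switch_par_def using card_two_int[OF ne, of S] inS TU by simp
      show "par2 {f (\<phi>1 T), f (\<phi>1 U)} = switch_par S par1 {\<phi>1 T, \<phi>1 U}"
      proof (cases "i \<in> T")
        case False
        then have U: "U = insert i T" using i by (simp add: A1.flip_def)
        have gU: "g U = (g T \<noteq> D T i)" using pot[OF h(1) i(1) False] U by simp
        have DT: "D T i = (par1 {\<phi>1 T, \<phi>1 U} \<noteq> par2 {\<phi>2 T, \<phi>2 U})" unfolding D_def U ..
        show ?thesis unfolding f\<phi>[OF TU(1)] f\<phi>[OF TU(2)] sw using gU DT by auto
      next
        case True
        then have U: "T = insert i U" "i \<notin> U" using i by (auto simp: A1.flip_def)
        have gT: "g T = (g U \<noteq> D U i)" using pot[OF h(2) i(1) U(2)] U(1) by simp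
        have DU: "D U i = (par1 {\<phi>1 U, \<phi>1 T} \<noteq> par2 {\<phi>2 U, \<phi>2 T})" unfolding D_def U(1) ..
        have c1: "{\<phi>1 U, \<phi>1 T} = {\<phi>1 T, \<phi>1 U}" "{\<phi>2 U, \<phi>2 T} = {\<phi>2 T, \<phi>2 U}" by auto
        have DU': "D U i = (par1 {\<phi>1 T, \<phi>1 U} \<noteq> par2 {\<phi>2 T, \<phi>2 U})" using DU c1 by simp
        show ?thesis unfolding f\<phi>[OF TU(1)] f\<phi>[OF TU(2)] sw using gT DU' by auto
      qed
    qed
  qed
  show ?thesis
    apply (rule exI[of _ f])
    apply (intro conjI)
        apply (rule fbij)
       apply (rule P1)
      apply (rule P2)
     apply (rule P3)
    apply (rule exI[of _ S])
    using SV P4 by blast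
qed

end
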